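(* Let $x\cdot y$ be a PA-structure on $(\mathfrak{g},\mathfrak{n})$, where $\mathfrak{g}$ and $\mathfrak{n}$ are $2$-step nilpotent. Then the product $x\circ y=\frac12(x\cdot y+y\cdot x)$ defines a CPA-structure on $\mathfrak{g}$ if and only if $$[L(x)+R(x),\mathrm{ad}(y)]=\mathrm{ad}(x\cdot y+y\cdot x)\quad\text{for all }x,y\in V.$$ (Equivalently, $x\cdot[y,z]+[y,z]\cdot x=[y,x\cdot z]+[y,z\cdot x]-[z,x\cdot y]-[z,y\cdot x]$ for all $x,y,z\in V$.)
   Context: Let $K$ be a field of characteristic zero and $V$ a finite-dimensional vector space over $K$. Let $\mathfrak{g}=(V,[\,,])$ and $\mathfrak{n}=(V,\{\,,\})$ be two Lie algebra structures on $V$. A post-Lie algebra structure (PA-structure) on the pair $(\mathfrak{g},\mathfrak{n})$ is a $K$-bilinear product $x\cdot y$ on $V$ satisfying, for all $x,y,z\in V$: (i) $x\cdot y-y\cdot x=[x,y]-\{x,y\}$; (ii) $[x,y]\cdot z=x\cdot(y\cdot z)-y\cdot(x\cdot z)$; (iii) $x\cdot\{y,z\}=\{x\cdot y,z\}+\{y,x\cdot z\}$. Write $L(x)(y)=x\cdot y$, $R(x)(y)=y\cdot x$, $\mathrm{ad}(x)(y)=[x,y]$; brackets of operators are commutators in $\mathrm{End}(V)$. A commutative post-Lie algebra structure (CPA-structure) on a Lie algebra $(V,[\,,])$ is a bilinear product $x\circ y$ on $V$ with $x\circ y=y\circ x$, $[x,y]\circ z=x\circ(y\circ z)-y\circ(x\circ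 z)$, and $x\circ[y,z]=[x\circ y,z]+[y,x\circ z]$ for all $x,y,z$. A Lie algebra is called $2$-step nilpotent here if it is nilpotent of class at most $2$, i.e. all brackets of the form $[[x,y],z]$ vanish. *)

theory Defs
  imports "HOL-Analysis.Analysis"
begin

text \<open>The vector space V is modelled as K^n, i.e. the type 'k ^ 'n with 'n finite
  and 'k a field of characteristic zero; scalar multiplication is (*s).\<close>

definition bilinear_map :: "('k::field ^ 'n \<Rightarrow> 'k ^ 'n \<Rightarrow> 'k ^ 'n) \<Rightarrow> bool" where
  "bilinear_map b \<longleftrightarrow>
     (\<forall>x y z. b (x + y) z = b x z + b y z) \<and>
     (\<forall>x y z. b x (y + z) = b x y + b x z) \<and>
     (\<forall>c x y. b (c *s x) y = c *s b x y) \<and>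
     (\<forall>c x y. b x (c *s y) = c *s b x y)"

definition lie_algebra :: "('k::field ^ 'n \<Rightarrow> 'k ^ 'n \<Rightarrow> 'k ^ 'n) \<Rightarrow> bool" where
  "lie_algebra br \<longleftrightarrow> bilinear_map br \<and>
     (\<forall>x. br x x = 0) \<and>
     (\<forall>x y z. br x (br y z) + br y (br z x) + br z (br x y) = 0)"

definition two_step_nilpotent :: "('k::field ^ 'n \<Rightarrow> 'k ^ 'n \<Rightarrow> 'k ^ 'n) \<Rightarrow> bool" where
  "two_step_nilpotent br \<longleftrightarrow> (\<forall>x y z. br (br x y) z = 0)"

text \<open>PA-structure x\<cdot>y = p x y on the pair (g, n) = (V, br), (V, nbr).\<close>
definition PA_structure ::
  "('k::field ^ 'n \<Rightarrow> 'k ^ 'n \<Rightarrow> 'k ^ 'n) \<Rightarrow> ('k ^ 'n \<Rightarrow> 'k ^ 'n \<Rightarrow> 'k ^ 'n)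
   \<Rightarrow> ('k ^ 'n \<Rightarrow> 'k ^ 'n \<Rightarrow> 'k ^ 'n) \<Rightarrow> bool" where
  "PA_structure br nbr p \<longleftrightarrow> bilinear_map p \<and>
     (\<forall>x y. p x y - p y x = br x y - nbr x y) \<and>
     (\<forall>x y z. p (br x y) z = p x (p y z) - p y (p x z)) \<and>
     (\<forall>x y z. p x (nbr y z) = nbr (p x y) z + nbr y (p x z))"

definition CPA_structure ::
  "('k::field ^ 'n \<Rightarrow> 'k ^ 'n \<Rightarrow> 'k ^ 'n) \<Rightarrow> ('k ^ 'n \<Rightarrow> 'k ^ 'n \<Rightarrow> 'k ^ 'n) \<Rightarrow> bool" where
  "CPA_structure br q \<longleftrightarrow> bilinear_map q \<and>
     (\<forall>x y. q x y = q y x) \<and>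
     (\<forall>x y z. q (br x y) z = q x (q y z) - q y (q x z)) \<and>
     (\<forall>x y z. q x (br y z) = br (q x y) z + br y (q x z))"

definition Lmul :: "('a \<Rightarrow> 'a \<Rightarrow> 'a) \<Rightarrow> 'a \<Rightarrow> 'a \<Rightarrow> 'a" where
  "Lmul p x = (\<lambda>y. p x y)"

definition Rmul :: "('a \<Rightarrow> 'a \<Rightarrow> 'a) \<Rightarrow> 'a \<Rightarrow> 'a \<Rightarrow> 'a" where
  "Rmul p x = (\<lambda>y. p y x)"

definition ad :: "('a \<Rightarrow> 'a \<Rightarrow> 'a) \<Rightarrow> 'a \<Rightarrow> 'a \<Rightarrow> 'a" where
  "ad br x = (\<lambda>y. br x y)"

definition opcomm :: "('a::ab_group_add \<Rightarrow> 'a) \<Rightarrow> ('a \<Rightarrow> 'a) \<Rightarrow> 'a \<Rightarrow> 'a" where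
  "opcomm A B = (\<lambda>v. A (B v) - B (A v))"

definition opadd :: "('a::ab_group_add \<Rightarrow> 'a) \<Rightarrow> ('a \<Rightarrow> 'a) \<Rightarrow> 'a \<Rightarrow> 'a" where
  "opadd A B = (\<lambda>v. A v + B v)"

end

theory Submission
  imports Defs
begin

lemma two_cancel: "((2::'k::field_char_0)*a + 2*b = 2*c + (2*d + (2*e + 2*f))) \<longleftrightarrow> (a+b = c+(d+(e+f)))"
proof -
  have "((2::'k)*a + 2*b = 2*c + (2*d + (2*e + 2*f))) \<longleftrightarrow> (2*(a+b) = 2*(c+(d+(e+f))))"
    by (simp only: distrib_left)
  also have "\<dots> \<longleftrightarrow> (a+b = c+(d+(e+f)))" by (metis mult_cancel_left zero_neq_numeral)
  finally show ?thesis .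
qed

lemma bil:
  fixes b :: "'k::field ^ 'n \<Rightarrow> 'k ^ 'n \<Rightarrow> 'k ^ 'n"
  assumes "bilinear_map b"
  shows "b (x+y) z = b x z + b y z" "b x (y+z) = b x y + b x z"
    "b (c *s x) y = c *s b x y" "b x (c *s y) = c *s b x y"
    "b 0 y = 0" "b x 0 = 0" "b (-x) y = - b x y" "b x (-y) = - b x y"
    "b (x - y) z = b x z - b y z" "b x (y - z) = b x y - b x z"
proof -
  have a1: "\<And>x y z. b (x+y) z = b x z + b y z" and a2: "\<And>x y z. b x (y+z) = b x y + b x z"
    and a3: "\<And>c x y. b (c *s x) y = c *s b x y" and a4: "\<And>c x y. b x (c *s y) = c *s b x y"
    using assms unfolding bilinear_map_def by blast+
  show "b (x+y) z = b x z + b y z" "b x (y+z) = b x y + b x z"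
    "b (c *s x) y = c *s b x y" "b x (c *s y) = c *s b x y" by (fact a1 a2 a3 a4)+
  have z1: "\<And>y. b 0 y = 0" using a1[of 0 0] by simp
  have z2: "\<And>x. b x 0 = 0" using a2[of _ 0 0] by simp
  show "b 0 y = 0" "b x 0 = 0" by (fact z1 z2)+
  have n1: "\<And>x y. b (-x) y = - b x y" using a1[of _ "-_"] z1
    by (metis add.right_inverse add_eq_0_iff)
  have n2: "\<And>x y. b x (-y) = - b x y" using a2[of _ _ "-_"] z2
    by (metis add.right_inverse add_eq_0_iff)
  show "b (-x) y = - b x y" "b x (-y) = - b x y" by (fact n1 n2)+
  show "b (x - y) z = b x z - b y z" "b x (y - z) = b x y - b x z"
    using a1[of x "-y"] a2[of x y "-z"] n1 n2 by simp_all
qed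

lemma lie_anti:
  fixes br :: "'k::field ^ 'n \<Rightarrow> 'k ^ 'n \<Rightarrow> 'k ^ 'n"
  assumes "lie_algebra br" shows "br x y = - br y x"
proof -
  have b: "bilinear_map br" and z: "\<And>x. br x x = 0" using assms unfolding lie_algebra_def by auto
  have "br (x+y) (x+y) = 0" by (rule z)
  then have "br x y + br y x = 0" using z[of x] z[of y] by (simp add: bil[OF b] add.commute)
  then show ?thesis by (simp add: eq_neg_iff_add_eq_0)
qed

lemma nil2:
  fixes br :: "'k::field ^ 'n \<Rightarrow> 'k ^ 'n \<Rightarrow> 'k ^ 'n"
  assumes "lie_algebra br" "two_step_nilpotent br"
  shows "br (br x y) z = 0" "br x (br y z) = 0"
  using assms lie_anti[OF assms(1), of x "br y z"] unfolding two_step_nilpotent_def by simp_all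

lemma comb:
  fixes a0 a1 a2 a3 a4 a5 a6 a7 a8 a9 a10 a11 a12 a13 a14 a15 a16 a17 a18 a19 a20 a21 a22 a23 a24 a25 a26 a27 a28 a29 a30 a31 a32 a33 a34 a35 a36 a37 a38 a39 a40 a41 a42 a43 a44 a45 a46 e0 e1 e2 e3 e4 e5 e6 e7 e8 e9 e10 e11 e12 e13 e14 e15 e16 e17 e18 e19 e20 e21 e22 e23 e24 e25 e26 e27 e28 e29 e30 e31 e32 t :: "'k::field_char_0"
  assumes h0: "(-1)*a0 + (1)*a1 + (1)*a2 = e0"
    and h1: "(-1)*a3 + (1)*a4 + (1)*a5 + (-1)*a6 = e1"
    and h2: "(-1)*a7 + (1)*a5 + (1)*a8 = e2"
    and h3: "(-1)*a9 + (1)*a6 + (1)*a10 = e3"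
    and h4: "(-1)*a10 + (1)*a11 + (1)*a12 + (-1)*a13 = e4"
    and h5: "(1)*a14 = e5"
    and h6: "(1)*a15 = e6"
    and h7: "(-1)*a15 + (1)*a16 + (-1)*a17 + (1)*a8 = e7"
    and h8: "(-1)*a16 + (1)*a14 + (1)*a18 + (-1)*a19 = e8"
    and h9: "(-1)*a20 + (1)*a21 + (1)*a22 + (-1)*a23 = e9"
    and h10: "(1)*a24 + (1)*a20 = e10"
    and h11: "(-1)*a20 + (1)*a25 + (-1)*a26 + (1)*a10 = e11"
    and h12: "(-1)*a27 + (1)*a18 + (-1)*a1 + (1)*a28 = e12"
    and h13: "(-1)*a15 + (1)*a29 + (1)*a27 + (-1)*a30 = e13"
    and h14: "(-1)*a29 + (1)*a14 + (-1)*a31 + (1)*a32 = e14"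
    and h15: "(-1)*a17 + (1)*a31 + (1)*a1 + (-1)*a9 = e15"
    and h16: "(1)*a33 + (1)*a25 = e16"
    and h17: "(-1)*a34 + (-1)*a19 + (1)*a4 = e17"
    and h18: "(1)*a24 = e18"
    and h19: "(1)*a35 = e19"
    and h20: "(-1)*a33 + (1)*a35 + (1)*a36 + (-1)*a34 = e20"
    and h21: "(1)*a9 + (-1)*a6 + (1)*a37 = e21"
    and h22: "(1)*a35 + (1)*a38 = e22"
    and h23: "(1)*a36 + (1)*a39 = e23"
    and h24: "(-1)*a22 + (1)*a39 + (-1)*a0 + (1)*a12 = e24"
    and h25: "(-1)*a21 + (1)*a38 + (-1)*a40 + (1)*a11 = e25"
    and h26: "(-1)*a26 + (1)*a40 + (1)*a0 + (-1)*a7 = e26"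
    and h27: "(1)*a17 + (1)*a41 = e27"
    and h28: "(-1)*a42 + (-1)*a43 + (-1)*a22 + (-1)*a23 + (1)*a41 + (1)*a44 = e28"
    and h29: "(-1)*a42 + (-1)*a43 + (-1)*a27 + (-1)*a30 + (1)*a45 + (1)*a37 = e29"
    and h30: "(1)*a26 + (1)*a45 = e30"
    and h31: "(1)*a7 + (-1)*a5 + (1)*a44 = e31"
    and h32: "(-1)*a8 + (1)*a32 + (1)*a28 + (-1)*a46 = e32"
    and ht: "(-1)*a0 + (-1)*a7 + (1)*a1 + (1)*a9 + (2)*a3 + (2)*a2 + (1)*a28 + (-1)*a12 + (1)*a46 + (-1)*a13 = t"
  shows "t = (2)*e0 + (-2)*e1 + (1)*e2 + (-1)*e3 + (1)*e4 + (1)*e5 + (-1)*e6 + (-2)*e7 + (-2)*e8 + (-1)*e9 + (1)*e10 + (2)*e11 + (2)*e12 + (1)*e13 + (1)*e14 + (1)*e15 + (-2)*e16 + (2)*e17 + (-1)*e18 + (1)*e19 + (-2)*e20 + (1)*e21 + (1)*e22 + (2)*e23 + (-2)*e24 + (-1)*e25 + (-1)*e26 + (-1)*e27 + (1)*e28 + (-1)*e29 + (1)*e30 + (-1)*e31 + (-1)*e32"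
  unfolding h0[symmetric] h1[symmetric] h2[symmetric] h3[symmetric] h4[symmetric] h5[symmetric] h6[symmetric] h7[symmetric] h8[symmetric] h9[symmetric] h10[symmetric] h11[symmetric] h12[symmetric] h13[symmetric] h14[symmetric] h15[symmetric] h16[symmetric] h17[symmetric] h18[symmetric] h19[symmetric] h20[symmetric] h21[symmetric] h22[symmetric] h23[symmetric] h24[symmetric] h25[symmetric] h26[symmetric] h27[symmetric] h28[symmetric] h29[symmetric] h30[symmetric] h31[symmetric] h32[symmetric] ht[symmetric] by (simp add: algebra_simps)

lemma partA:
  fixes br nbr p :: "'k::field_char_0 ^ 'n \<Rightarrow> 'k ^ 'n \<Rightarrow> 'k ^ 'n"
  assumes L1: "lie_algebra br" and L2: "lie_algebra nbr"
    and N1: "two_step_nilpotent br" and N2: "two_step_nilpotent nbr"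
    and PA: "PA_structure br nbr p"
    and hb: "\<And>x y z. (1/2) *s (p x (br y z) + p (br y z) x) = br ((1/2) *s (p x y + p y x)) z + br y ((1/2) *s (p x z + p z x))"
  shows "(1/2) *s (p (br x y) z + p z (br x y)) =
     (1/2) *s (p x ((1/2) *s (p y z + p z y)) + p ((1/2) *s (p y z + p z y)) x)
   - (1/2) *s (p y ((1/2) *s (p x z + p z x)) + p ((1/2) *s (p x z + p z x)) y)"
proof -
  have bp: "bilinear_map p" using PA unfolding PA_structure_def by auto
  have bb: "bilinear_map br" using L1 unfolding lie_algebra_def by auto
  have bn: "bilinear_map nbr" using L2 unfolding lie_algebra_def by auto
  note bl = bil[OF bp] bil[OF bb] bil[OF bn]
  have PAi: "\<And>x y. p x y - p y x = br x y - nbr x y"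
   and PAii: "\<And>x y z. p (br x y) z = p x (p y z) - p y (p x z)"
   and PAiii: "\<And>x y z. p x (nbr y z) = nbr (p x y) z + nbr y (p x z)"
    using PA unfolding PA_structure_def by auto
  note nil = nil2[OF L1 N1] nil2[OF L2 N2]
  note anti = lie_anti[OF L1] lie_anti[OF L2]
  have f0: "p (br x y) z = p x (p y z) - p y (p x z)" by (rule PAii)
  have f1: "p z (p x y) - p z (p y x) = p z (br x y) - p z (nbr x y)" using arg_cong[OF PAi[of x y], of "p z"] by (simp add: bl)
  have f2: "p (br x z) y = p x (p z y) - p z (p x y)" by (rule PAii)
  have f3: "p (br y z) x = p y (p z x) - p z (p y x)" by (rule PAii)
  have f4: "p (p y z) x - p (p z y) x = p (br y z) x - p (nbr y z) x" using arg_cong[OF PAi[of y z], of "\<lambda>w. p w x"] by (simp add: bl)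
  have f5: "nbr (nbr x z) y = 0" by (rule nil)
  have f6: "br (br x z) y = 0" by (rule nil)
  have f7: "p (br (x) (z)) y - p y (br (x) (z)) = br (br (x) (z)) y - nbr (br (x) (z)) y" by (rule PAi)
  have f8: "nbr (p x z) y - nbr (p z x) y = nbr (br x z) y - nbr (nbr x z) y" using arg_cong[OF PAi[of x z], of "\<lambda>w. nbr w y"] by (simp add: bl)
  have f9: "br (p y z) x - br (p z y) x = br (br y z) x - br (nbr y z) x" using arg_cong[OF PAi[of y z], of "\<lambda>w. br w x"] by (simp add: bl)
  have f10: "br x (br y z) = - br (br y z) x" by (rule anti)
  have f11: "p (br (y) (z)) x - p x (br (y) (z)) = br (br (y) (z)) x - nbr (br (y) (z)) x" by (rule PAi)
  have f12: "p (p (x) (z)) y - p y (p (x) (z)) = br (p (x) (z)) y - nbr (p (x) (z)) y" by (rule PAi)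
  have f13: "br (p x z) y - br (p z x) y = br (br x z) y - br (nbr x z) y" using arg_cong[OF PAi[of x z], of "\<lambda>w. br w y"] by (simp add: bl)
  have f14: "p (nbr (x) (z)) y - p y (nbr (x) (z)) = br (nbr (x) (z)) y - nbr (nbr (x) (z)) y" by (rule PAi)
  have f15: "p y (p x z) - p y (p z x) = p y (br x z) - p y (nbr x z)" using arg_cong[OF PAi[of x z], of "p y"] by (simp add: bl)
  have f16: "nbr x (br y z) = - nbr (br y z) x" by (rule anti)
  have f17: "p z (nbr x y) = nbr (p z x) y + nbr x (p z y)" by (rule PAiii)
  have f18: "br x (br y z) = 0" by (rule nil)
  have f19: "nbr x (nbr y z) = 0" by (rule nil)
  have f20: "nbr x (p y z) - nbr x (p z y) = nbr x (br y z) - nbr x (nbr y z)" using arg_cong[OF PAi[of y z], of "nbr x"] by (simp add: bl)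
  have f21: "p (br z y) x = p z (p y x) - p y (p z x)" by (rule PAii)
  have f22: "nbr x (nbr y z) = - nbr (nbr y z) x" by (rule anti)
  have f23: "nbr x (p y z) = - nbr (p y z) x" by (rule anti)
  have f24: "p (p (y) (z)) x - p x (p (y) (z)) = br (p (y) (z)) x - nbr (p (y) (z)) x" by (rule PAi)
  have f25: "p (nbr (y) (z)) x - p x (nbr (y) (z)) = br (nbr (y) (z)) x - nbr (nbr (y) (z)) x" by (rule PAi)
  have f26: "p x (p y z) - p x (p z y) = p x (br y z) - p x (nbr y z)" using arg_cong[OF PAi[of y z], of "p x"] by (simp add: bl)
  have f27: "p y (br x z) = - p y (br z x)" using anti[of x z] by (simp add: bl)
  have f28: "(1/2) *s (p y (br z x) + p (br z x) y) = br ((1/2) *s (p y z + p z y)) x + br z ((1/2) *s (p y x + p x y))" by (rule hb)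
  have f29: "(1/2) *s (p x (br z y) + p (br z y) x) = br ((1/2) *s (p x z + p z x)) y + br z ((1/2) *s (p x y + p y x))" by (rule hb)
  have f30: "p x (br y z) = - p x (br z y)" using anti[of y z] by (simp add: bl)
  have f31: "p (br z x) y = p z (p x y) - p x (p z y)" by (rule PAii)
  have f32: "p (p x z) y - p (p z x) y = p (br x z) y - p (nbr x z) y" using arg_cong[OF PAi[of x z], of "\<lambda>w. p w y"] by (simp add: bl)

  show ?thesis (is "?L = ?R")
  proof (rule iffD2[OF vec_eq_iff], rule allI)
    fix i
    have g0: "(-1)*(p x (p y z) $ i) + (1)*(p y (p x z) $ i) + (1)*(p (br x y) z $ i) = 0"
      using f0[THEN arg_cong[where f="\<lambda>v. v $ i"]] by (simp add: bl algebra_simps)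
    have g1: "(-1)*(p z (br x y) $ i) + (1)*(p z (nbr x y) $ i) + (1)*(p z (p x y) $ i) + (-1)*(p z (p y x) $ i) = 0"
      using f1[THEN arg_cong[where f="\<lambda>v. v $ i"]] by (simp add: bl algebra_simps)
    have g2: "(-1)*(p x (p z y) $ i) + (1)*(p z (p x y) $ i) + (1)*(p (br x z) y $ i) = 0"
      using f2[THEN arg_cong[where f="\<lambda>v. v $ i"]] by (simp add: bl algebra_simps)
    have g3: "(-1)*(p y (p z x) $ i) + (1)*(p z (p y x) $ i) + (1)*(p (br y z) x $ i) = 0"
      using f3[THEN arg_cong[where f="\<lambda>v. v $ i"]] by (simp add: bl algebra_simps)
    have g4: "(-1)*(p (br y z) x $ i) + (1)*(p (nbr y z) x $ i) + (1)*(p (p y z) x $ i) + (-1)*(p (p z y) x $ i) = 0"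
      using f4[THEN arg_cong[where f="\<lambda>v. v $ i"]] by (simp add: bl algebra_simps)
    have g5: "(1)*(nbr (nbr x z) y $ i) = 0"
      using f5[THEN arg_cong[where f="\<lambda>v. v $ i"]] by (simp add: bl algebra_simps)
    have g6: "(1)*(br (br x z) y $ i) = 0"
      using f6[THEN arg_cong[where f="\<lambda>v. v $ i"]] by (simp add: bl algebra_simps)
    have g7: "(-1)*(br (br x z) y $ i) + (1)*(nbr (br x z) y $ i) + (-1)*(p y (br x z) $ i) + (1)*(p (br x z) y $ i) = 0"
      using f7[THEN arg_cong[where f="\<lambda>v. v $ i"]] by (simp add: bl algebra_simps)
    have g8: "(-1)*(nbr (br x z) y $ i) + (1)*(nbr (nbr x z) y $ i) + (1)*(nbr (p x z) y $ i) + (-1)*(nbr (p z x) y $ i) = 0"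
      using f8[THEN arg_cong[where f="\<lambda>v. v $ i"]] by (simp add: bl algebra_simps)
    have g9: "(-1)*(br (br y z) x $ i) + (1)*(br (nbr y z) x $ i) + (1)*(br (p y z) x $ i) + (-1)*(br (p z y) x $ i) = 0"
      using f9[THEN arg_cong[where f="\<lambda>v. v $ i"]] by (simp add: bl algebra_simps)
    have g10: "(1)*(br x (br y z) $ i) + (1)*(br (br y z) x $ i) = 0"
      using f10[THEN arg_cong[where f="\<lambda>v. v $ i"]] by (simp add: bl algebra_simps)
    have g11: "(-1)*(br (br y z) x $ i) + (1)*(nbr (br y z) x $ i) + (-1)*(p x (br y z) $ i) + (1)*(p (br y z) x $ i) = 0"
      using f11[THEN arg_cong[where f="\<lambda>v. v $ i"]] by (simp add: bl algebra_simps)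
    have g12: "(-1)*(br (p x z) y $ i) + (1)*(nbr (p x z) y $ i) + (-1)*(p y (p x z) $ i) + (1)*(p (p x z) y $ i) = 0"
      using f12[THEN arg_cong[where f="\<lambda>v. v $ i"]] by (simp add: bl algebra_simps)
    have g13: "(-1)*(br (br x z) y $ i) + (1)*(br (nbr x z) y $ i) + (1)*(br (p x z) y $ i) + (-1)*(br (p z x) y $ i) = 0"
      using f13[THEN arg_cong[where f="\<lambda>v. v $ i"]] by (simp add: bl algebra_simps)
    have g14: "(-1)*(br (nbr x z) y $ i) + (1)*(nbr (nbr x z) y $ i) + (-1)*(p y (nbr x z) $ i) + (1)*(p (nbr x z) y $ i) = 0"
      using f14[THEN arg_cong[where f="\<lambda>v. v $ i"]] by (simp add: bl algebra_simps)
    have g15: "(-1)*(p y (br x z) $ i) + (1)*(p y (nbr x z) $ i) + (1)*(p y (p x z) $ i) + (-1)*(p y (p z x) $ i) = 0"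
      using f15[THEN arg_cong[where f="\<lambda>v. v $ i"]] by (simp add: bl algebra_simps)
    have g16: "(1)*(nbr x (br y z) $ i) + (1)*(nbr (br y z) x $ i) = 0"
      using f16[THEN arg_cong[where f="\<lambda>v. v $ i"]] by (simp add: bl algebra_simps)
    have g17: "(-1)*(nbr x (p z y) $ i) + (-1)*(nbr (p z x) y $ i) + (1)*(p z (nbr x y) $ i) = 0"
      using f17[THEN arg_cong[where f="\<lambda>v. v $ i"]] by (simp add: bl algebra_simps)
    have g18: "(1)*(br x (br y z) $ i) = 0"
      using f18[THEN arg_cong[where f="\<lambda>v. v $ i"]] by (simp add: bl algebra_simps)
    have g19: "(1)*(nbr x (nbr y z) $ i) = 0"
      using f19[THEN arg_cong[where f="\<lambda>v. v $ i"]] by (simp add: bl algebra_simps)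
    have g20: "(-1)*(nbr x (br y z) $ i) + (1)*(nbr x (nbr y z) $ i) + (1)*(nbr x (p y z) $ i) + (-1)*(nbr x (p z y) $ i) = 0"
      using f20[THEN arg_cong[where f="\<lambda>v. v $ i"]] by (simp add: bl algebra_simps)
    have g21: "(1)*(p y (p z x) $ i) + (-1)*(p z (p y x) $ i) + (1)*(p (br z y) x $ i) = 0"
      using f21[THEN arg_cong[where f="\<lambda>v. v $ i"]] by (simp add: bl algebra_simps)
    have g22: "(1)*(nbr x (nbr y z) $ i) + (1)*(nbr (nbr y z) x $ i) = 0"
      using f22[THEN arg_cong[where f="\<lambda>v. v $ i"]] by (simp add: bl algebra_simps)
    have g23: "(1)*(nbr x (p y z) $ i) + (1)*(nbr (p y z) x $ i) = 0"
      using f23[THEN arg_cong[where f="\<lambda>v. v $ i"]] by (simp add: bl algebra_simps)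
    have g24: "(-1)*(br (p y z) x $ i) + (1)*(nbr (p y z) x $ i) + (-1)*(p x (p y z) $ i) + (1)*(p (p y z) x $ i) = 0"
      using f24[THEN arg_cong[where f="\<lambda>v. v $ i"]] by (simp add: bl algebra_simps)
    have g25: "(-1)*(br (nbr y z) x $ i) + (1)*(nbr (nbr y z) x $ i) + (-1)*(p x (nbr y z) $ i) + (1)*(p (nbr y z) x $ i) = 0"
      using f25[THEN arg_cong[where f="\<lambda>v. v $ i"]] by (simp add: bl algebra_simps)
    have g26: "(-1)*(p x (br y z) $ i) + (1)*(p x (nbr y z) $ i) + (1)*(p x (p y z) $ i) + (-1)*(p x (p z y) $ i) = 0"
      using f26[THEN arg_cong[where f="\<lambda>v. v $ i"]] by (simp add: bl algebra_simps)
    have g27: "(1)*(p y (br x z) $ i) + (1)*(p y (br z x) $ i) = 0"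
      using f27[THEN arg_cong[where f="\<lambda>v. v $ i"]] by (simp add: bl algebra_simps)
    have g28: "(-1)*(br z (p x y) $ i) + (-1)*(br z (p y x) $ i) + (-1)*(br (p y z) x $ i) + (-1)*(br (p z y) x $ i) + (1)*(p y (br z x) $ i) + (1)*(p (br z x) y $ i) = 0"
      using f28[THEN arg_cong[where f="\<lambda>v. v $ i"]] by (simp add: bl, algebra)
    have g29: "(-1)*(br z (p x y) $ i) + (-1)*(br z (p y x) $ i) + (-1)*(br (p x z) y $ i) + (-1)*(br (p z x) y $ i) + (1)*(p x (br z y) $ i) + (1)*(p (br z y) x $ i) = 0"
      using f29[THEN arg_cong[where f="\<lambda>v. v $ i"]] by (simp add: bl, algebra)
    have g30: "(1)*(p x (br y z) $ i) + (1)*(p x (br z y) $ i) = 0"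
      using f30[THEN arg_cong[where f="\<lambda>v. v $ i"]] by (simp add: bl algebra_simps)
    have g31: "(1)*(p x (p z y) $ i) + (-1)*(p z (p x y) $ i) + (1)*(p (br z x) y $ i) = 0"
      using f31[THEN arg_cong[where f="\<lambda>v. v $ i"]] by (simp add: bl algebra_simps)
    have g32: "(-1)*(p (br x z) y $ i) + (1)*(p (nbr x z) y $ i) + (1)*(p (p x z) y $ i) + (-1)*(p (p z x) y $ i) = 0"
      using f32[THEN arg_cong[where f="\<lambda>v. v $ i"]] by (simp add: bl algebra_simps)
    have gt: "(-1)*(p x (p y z) $ i) + (-1)*(p x (p z y) $ i) + (1)*(p y (p x z) $ i) + (1)*(p y (p z x) $ i) + (2)*(p z (br x y) $ i) + (2)*(p (br x y) z $ i) + (1)*(p (p x z) y $ i) + (-1)*(p (p y z) x $ i) + (1)*(p (p z x) y $ i) + (-1)*(p (p z y) x $ i) = 4 * (?L $ i - ?R $ i)"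
      by (simp add: bl algebra_simps)
    from comb[OF g0 g1 g2 g3 g4 g5 g6 g7 g8 g9 g10 g11 g12 g13 g14 g15 g16 g17 g18 g19 g20 g21 g22 g23 g24 g25 g26 g27 g28 g29 g30 g31 g32 gt] have "4 * (?L $ i - ?R $ i) = 0" by simp
    then have d: "?L $ i - ?R $ i = 0" by (metis mult_eq_0_iff zero_neq_numeral)
    then show "?L $ i = ?R $ i" by (metis eq_iff_diff_eq_0)
  qed
qed


theorem proposition4p3:
  fixes br nbr p :: "'k::field_char_0 ^ 'n \<Rightarrow> 'k ^ 'n \<Rightarrow> 'k ^ 'n"
  assumes "lie_algebra br" and "lie_algebra nbr"
    and "two_step_nilpotent br" and "two_step_nilpotent nbr"
    and "PA_structure br nbr p"
  shows "CPA_structure br (\<lambda>x y. (1/2) *s (p x y + p y x)) \<longleftrightarrow>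
    (\<forall>x y. opcomm (opadd (Lmul p x) (Rmul p x)) (ad br y) = ad br (p x y + p y x))"
proof -
  have bp: "bilinear_map p" using assms(5) unfolding PA_structure_def by auto
  have bb: "bilinear_map br" using assms(1) unfolding lie_algebra_def by auto
  note bl = bil[OF bp] bil[OF bb]
  have pt: "\<And>x y v. ((1/2) *s (p x (br y v) + p (br y v) x) = br ((1/2) *s (p x y + p y x)) v + br y ((1/2) *s (p x v + p v x)))
     \<longleftrightarrow> ((p x (br y v) + p (br y v) x) - br y (p x v + p v x) = br (p x y + p y x) v)"
    by (simp add: bl vec_eq_iff field_simps two_cancel)
  have c_iff: "(\<forall>x y. opcomm (opadd (Lmul p x) (Rmul p x)) (ad br y) = ad br (p x y + p y x))
    \<longleftrightarrow> (\<forall>x y v. (1/2) *s (p x (br y v) + p (br y v) x) = br ((1/2) *s (p x y + p y x)) v + br y ((1/2) *s (p x v + p v x)))"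
    unfolding pt by (simp add: opcomm_def opadd_def Lmul_def Rmul_def ad_def fun_eq_iff)
  have bq: "bilinear_map (\<lambda>x y. (1/2) *s (p x y + p y x))"
    unfolding bilinear_map_def by (simp add: bl vec_eq_iff algebra_simps)
  show ?thesis
  proof
    assume "CPA_structure br (\<lambda>x y. (1/2) *s (p x y + p y x))"
    then have "\<forall>x y v. (1/2) *s (p x (br y v) + p (br y v) x) = br ((1/2) *s (p x y + p y x)) v + br y ((1/2) *s (p x v + p v x))"
      unfolding CPA_structure_def by blast
    then show "\<forall>x y. opcomm (opadd (Lmul p x) (Rmul p x)) (ad br y) = ad br (p x y + p y x)"
      using c_iff by blast
  next
    assume "\<forall>x y. opcomm (opadd (Lmul p x) (Rmul p x)) (ad br y) = ad br (p x y + p y x)"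
    then have hb: "\<forall>x y v. (1/2) *s (p x (br y v) + p (br y v) x) = br ((1/2) *s (p x y + p y x)) v + br y ((1/2) *s (p x v + p v x))"
      using c_iff by blast
    have A: "\<And>x y z. (1/2) *s (p (br x y) z + p z (br x y)) =
     (1/2) *s (p x ((1/2) *s (p y z + p z y)) + p ((1/2) *s (p y z + p z y)) x)
   - (1/2) *s (p y ((1/2) *s (p x z + p z x)) + p ((1/2) *s (p x z + p z x)) y)"
      by (rule partA[OF assms]) (use hb in blast)
    show "CPA_structure br (\<lambda>x y. (1/2) *s (p x y + p y x))"
      unfolding CPA_structure_def using bq A hb by (simp add: add.commute)
  qed
qed

end
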